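(* Let $G$ be a simple graph on $n$ vertices with $cM_2(G)\ge cM_2(H)$ for every simple graph $H$ on $n$ vertices, and let $F$, $X$ be as defined in the context. If $u,v\in X$ are distinct and $uv\notin E(G)$, then $d_G(u)=d_G(v)$, and $d_G(w)\ne d_G(u)$ for every $w\in X\setminus\{u,v\}$.
   Context: All graphs are finite and simple; $d_G(u)$ is the degree of $u$ and $cM_2(G)=\sum_{uv\in E(G)}|d_G(u)^2-d_G(v)^2|$. The canonical mixed graph $F$ of $G$ has vertex set $V(G)$; for each edge $uv\in E(G)$: if $d_G(u)>d_G(v)$ then $F$ contains the arc $\overrightarrow{uv}$, and if $d_G(u)=d_G(v)$ then $F$ contains the undirected edge $uv$. $d^+_F(u)$ (resp. $d^-_F(u)$) is the number of arcs of $F$ with tail (resp. head) $u$. $X=\{u\in V(G): d^+_F(u)\ge d^-_F(u)\}$ and $Y=\{u\in V(G): d^+_F(u)< d^-_F(u)\}$. *)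

theory Defs
  imports Main
begin

definition simple_graph :: "'a set \<Rightarrow> 'a set set \<Rightarrow> bool" where
  "simple_graph V E \<longleftrightarrow> finite V \<and> (\<forall>e\<in>E. e \<subseteq> V \<and> card e = 2)"

definition deg :: "'a set \<Rightarrow> 'a set set \<Rightarrow> 'a \<Rightarrow> nat" where
  "deg V E u = card {v\<in>V. {u, v} \<in> E}"

text \<open>cM2(G) = sum over edges uv of |d(u)^2 - d(v)^2|; each edge is counted twice in the
  double sum over ordered pairs, hence the division by 2.\<close>
definition cM2 :: "'a set \<Rightarrow> 'a set set \<Rightarrow> int" where
  "cM2 V E = (\<Sum>u\<in>V. \<Sum>v\<in>V. if {u, v} \<in> E
       then \<bar>int (deg V E u) ^ 2 - int (deg V E v) ^ 2\<bar> else 0) div 2"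

text \<open>Canonical mixed graph F: arc u->v iff uv is an edge and d(u) > d(v).\<close>
definition out_deg_F :: "'a set \<Rightarrow> 'a set set \<Rightarrow> 'a \<Rightarrow> nat" where
  "out_deg_F V E u = card {v\<in>V. {u, v} \<in> E \<and> deg V E v < deg V E u}"

definition in_deg_F :: "'a set \<Rightarrow> 'a set set \<Rightarrow> 'a \<Rightarrow> nat" where
  "in_deg_F V E u = card {v\<in>V. {u, v} \<in> E \<and> deg V E u < deg V E v}"

definition X_set :: "'a set \<Rightarrow> 'a set set \<Rightarrow> 'a set" where
  "X_set V E = {u\<in>V. in_deg_F V E u \<le> out_deg_F V E u}"

end

theory Submission
  imports Defs
begin

definition Tm :: "'a set \<Rightarrow> 'a set set \<Rightarrow> 'a \<Rightarrow> 'a \<Rightarrow> int" where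
  "Tm V E x y = (if {x,y} \<in> E then \<bar>int (deg V E x)^2 - int (deg V E y)^2\<bar> else 0)"

lemma cM2_Tm: "cM2 V E = (\<Sum>x\<in>V. \<Sum>y\<in>V. Tm V E x y) div 2"
  by (simp add: cM2_def Tm_def)

lemma Tm_sym: "Tm V E x y = Tm V E y x"
  by (simp add: Tm_def insert_commute abs_minus_commute)

lemma Tm_diag: "simple_graph V E \<Longrightarrow> Tm V E x x = 0"
  by (auto simp: Tm_def simple_graph_def)

lemma sum_split2:
  assumes "finite V" "u \<in> V" "v \<in> V" "u \<noteq> v"
  shows "sum f V = f u + f v + sum f (V - {u,v})"
proof -
  have "sum f V = f u + sum f (V - {u})" using assms by (simp add: sum.remove)
  also have "sum f (V - {u}) = f v + sum f (V - {u} - {v})"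
    using assms by (subst sum.remove[of _ v]) auto
  also have "V - {u} - {v} = V - {u,v}" by auto
  finally show ?thesis by (simp add: add.assoc)
qed

lemma habs_le: "(t::nat) \<le> a \<Longrightarrow> \<bar>int (a+1)^2 - int t^2\<bar> - \<bar>int a^2 - int t^2\<bar> = 2*int a+1"
proof -
  assume h: "t \<le> a"
  have "int t^2 \<le> int a^2" using h by (simp add: power_mono)
  moreover have "int t^2 \<le> int (a+1)^2" using h by (simp add: power_mono)
  ultimately show ?thesis by (simp add: power2_eq_square algebra_simps)
qed

lemma habs_gt: "a < (t::nat) \<Longrightarrow> \<bar>int (a+1)^2 - int t^2\<bar> - \<bar>int a^2 - int t^2\<bar> = -(2*int a+1)"
proof -
  assume h: "a < t"
  have "int a^2 \<le> int t^2" using h by (simp add: power_mono)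
  moreover have "int (a+1)^2 \<le> int t^2" using h by (simp add: power_mono)
  ultimately show ?thesis by (simp add: power2_eq_square algebra_simps)
qed

context
  fixes V :: "'a set" and E :: "'a set set" and u v :: 'a
  assumes sg: "simple_graph V E" and uV: "u \<in> V" and vV: "v \<in> V" and uv: "u \<noteq> v"
    and ne: "{u,v} \<notin> E"
begin

lemma finV: "finite V" using sg by (simp add: simple_graph_def)

lemma sg': "simple_graph V (insert {u,v} E)"
  using sg uV vV uv by (auto simp: simple_graph_def)

lemma deg'_u: "deg V (insert {u,v} E) u = deg V E u + 1"
proof -
  have "{y\<in>V. {u,y} \<in> insert {u,v} E} = insert v {y\<in>V. {u,y} \<in> E}"
    using vV by (auto simp: doubleton_eq_iff)
  moreover have "v \<notin> {y\<in>V. {u,y} \<in> E}" using ne by auto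
  ultimately show ?thesis using finV by (simp add: deg_def)
qed

lemma deg'_v: "deg V (insert {u,v} E) v = deg V E v + 1"
proof -
  have "{y\<in>V. {v,y} \<in> insert {u,v} E} = insert u {y\<in>V. {v,y} \<in> E}"
    using uV uv by (auto simp: doubleton_eq_iff)
  moreover have "u \<notin> {y\<in>V. {v,y} \<in> E}" using ne by (auto simp: insert_commute)
  ultimately show ?thesis using finV by (simp add: deg_def)
qed

lemma deg'_o: "x \<noteq> u \<Longrightarrow> x \<noteq> v \<Longrightarrow> deg V (insert {u,v} E) x = deg V E x"
  unfolding deg_def by (rule arg_cong[where f=card]) (auto simp: doubleton_eq_iff)

lemma row:
  "(\<Sum>y\<in>V-{u,v}. Tm V (insert {u,v} E) u y - Tm V E u y) =
     (2*int (deg V E u)+1) * (int (out_deg_F V E u) + int (card {y\<in>V. {u,y}\<in>E \<and> deg V E y = deg V E u})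
        - int (in_deg_F V E u))"
proof -
  define a where "a = deg V E u"
  define h where "h t = \<bar>int (a+1)^2 - int t^2\<bar> - \<bar>int a^2 - int t^2\<bar>" for t
  define N where "N = {y\<in>V. {u,y}\<in>E}"
  have finN: "finite N" using finV by (simp add: N_def)
  have "(\<Sum>y\<in>V-{u,v}. Tm V (insert {u,v} E) u y - Tm V E u y)
      = (\<Sum>y\<in>V-{u,v}. if {u,y}\<in>E then h (deg V E y) else 0)"
  proof (rule sum.cong)
    fix y assume y: "y \<in> V - {u,v}"
    have "{u,y} \<in> insert {u,v} E \<longleftrightarrow> {u,y} \<in> E" using y by (auto simp: doubleton_eq_iff)
    then show "Tm V (insert {u,v} E) u y - Tm V E u y = (if {u,y}\<in>E then h (deg V E y) else 0)"
      using y by (simp add: Tm_def h_def deg'_u deg'_o a_def)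
  qed simp
  also have "\<dots> = (\<Sum>y\<in>N. h (deg V E y))"
  proof -
    have "{y\<in>V-{u,v}. {u,y}\<in>E} = N" using sg ne by (auto simp: N_def simple_graph_def)
    then show ?thesis using sum.inter_filter[of "V-{u,v}" "\<lambda>y. h (deg V E y)" "\<lambda>y. {u,y}\<in>E"] finV
      by simp
  qed
  also have "\<dots> = (\<Sum>y\<in>N. (2*int a+1) * (of_bool (deg V E y < a) + of_bool (deg V E y = a) - of_bool (a < deg V E y)))"
  proof (rule sum.cong)
    fix y
    show "h (deg V E y) = (2*int a+1) * (of_bool (deg V E y < a) + of_bool (deg V E y = a) - of_bool (a < deg V E y))"
    proof (cases "deg V E y \<le> a")
      case True then show ?thesis using habs_le[OF True] by (auto simp: h_def)
    next
      case False then show ?thesis using habs_gt[of a "deg V E y"] by (auto simp: h_def)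
    qed
  qed simp
  also have "\<dots> = (2*int a+1) * ((\<Sum>y\<in>N. of_bool (deg V E y < a)) + (\<Sum>y\<in>N. of_bool (deg V E y = a)) - (\<Sum>y\<in>N. of_bool (a < deg V E y)))"
    by (simp add: sum_distrib_left[symmetric] sum.distrib sum_subtractf)
  also have "\<dots> = (2*int a+1) * (int (card (N \<inter> {y. deg V E y < a})) + int (card (N \<inter> {y. deg V E y = a})) - int (card (N \<inter> {y. a < deg V E y})))"
    using finN by simp
  also have "N \<inter> {y. deg V E y < a} = {y\<in>V. {u,y}\<in>E \<and> deg V E y < deg V E u}" by (auto simp: N_def a_def)
  also have "N \<inter> {y. deg V E y = a} = {y\<in>V. {u,y}\<in>E \<and> deg V E y = deg V E u}" by (auto simp: N_def a_def)
  also have "N \<inter> {y. a < deg V E y} = {y\<in>V. {u,y}\<in>E \<and> deg V E u < deg V E y}" by (auto simp: N_def a_def)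
  finally show ?thesis by (simp add: out_deg_F_def in_deg_F_def a_def)
qed

lemma total:
  "(\<Sum>x\<in>V. \<Sum>y\<in>V. Tm V (insert {u,v} E) x y) = (\<Sum>x\<in>V. \<Sum>y\<in>V. Tm V E x y)
    + 2 * (Tm V (insert {u,v} E) u v + (\<Sum>y\<in>V-{u,v}. Tm V (insert {u,v} E) u y - Tm V E u y)
         + (\<Sum>y\<in>V-{u,v}. Tm V (insert {u,v} E) v y - Tm V E v y))"
proof -
  define E' where "E' = insert {u,v} E"
  define D where "D x y = Tm V E' x y - Tm V E x y" for x y
  define R where "R = V - {u,v}"
  have sg'': "simple_graph V E'" using sg' by (simp add: E'_def)
  have D0: "D x y = 0" if "x \<in> R" "y \<in> R" for x y
  proof -
    have "{x,y} \<in> E' \<longleftrightarrow> {x,y} \<in> E" using that by (auto simp: E'_def R_def doubleton_eq_iff)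
    then show ?thesis using that by (simp add: D_def Tm_def E'_def deg'_o R_def)
  qed
  have Dsym: "D x y = D y x" for x y by (simp add: D_def Tm_sym[of V _ x y])
  have Duu: "D u u = 0" "D v v = 0" using sg sg'' by (simp_all add: D_def Tm_diag)
  have Duv: "D u v = Tm V E' u v" using ne by (simp add: D_def Tm_def)
  have rowu: "(\<Sum>y\<in>V. D u y) = Tm V E' u v + (\<Sum>y\<in>R. D u y)"
    using sum_split2[OF finV uV vV uv, of "D u"] Duu Duv by (simp add: R_def)
  have rowv: "(\<Sum>y\<in>V. D v y) = Tm V E' u v + (\<Sum>y\<in>R. D v y)"
    using sum_split2[OF finV uV vV uv, of "D v"] Duu Duv Dsym[of v u] by (simp add: R_def)
  have rowx: "(\<Sum>y\<in>V. D x y) = D u x + D v x" if "x \<in> R" for x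
  proof -
    have "(\<Sum>y\<in>R. D x y) = 0" using D0 that by simp
    then show ?thesis using sum_split2[OF finV uV vV uv, of "D x"] Dsym[of x u] Dsym[of x v]
      by (simp add: R_def)
  qed
  have "(\<Sum>x\<in>V. \<Sum>y\<in>V. D x y) = (\<Sum>y\<in>V. D u y) + (\<Sum>y\<in>V. D v y) + (\<Sum>x\<in>R. \<Sum>y\<in>V. D x y)"
    using sum_split2[OF finV uV vV uv, of "\<lambda>x. \<Sum>y\<in>V. D x y"] by (simp add: R_def)
  also have "(\<Sum>x\<in>R. \<Sum>y\<in>V. D x y) = (\<Sum>x\<in>R. D u x + D v x)" using rowx by simp
  also have "\<dots> = (\<Sum>x\<in>R. D u x) + (\<Sum>x\<in>R. D v x)" by (simp add: sum.distrib)
  finally have "(\<Sum>x\<in>V. \<Sum>y\<in>V. D x y) = 2 * (Tm V E' u v + (\<Sum>y\<in>R. D u y) + (\<Sum>y\<in>R. D v y))"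
    using rowu rowv by simp
  moreover have "(\<Sum>x\<in>V. \<Sum>y\<in>V. D x y) = (\<Sum>x\<in>V. \<Sum>y\<in>V. Tm V E' x y) - (\<Sum>x\<in>V. \<Sum>y\<in>V. Tm V E x y)"
    by (simp add: D_def sum_subtractf)
  ultimately show ?thesis by (simp add: E'_def D_def R_def)
qed

end


lemma gain:
  assumes sg: "simple_graph V E" and uX: "u \<in> X_set V E" and vX: "v \<in> X_set V E"
    and uv: "u \<noteq> v" and ne: "{u,v} \<notin> E"
  shows "cM2 V (insert {u,v} E) \<ge> cM2 V E + Tm V (insert {u,v} E) u v
     + (2*int (deg V E u)+1) * int (card {y\<in>V. {u,y}\<in>E \<and> deg V E y = deg V E u})
     + (2*int (deg V E v)+1) * int (card {y\<in>V. {v,y}\<in>E \<and> deg V E y = deg V E v})"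
proof -
  have uV: "u \<in> V" and vV: "v \<in> V" and iu: "in_deg_F V E u \<le> out_deg_F V E u"
    and iv: "in_deg_F V E v \<le> out_deg_F V E v" using uX vX by (auto simp: X_set_def)
  have c: "{v,u} = {u,v}" by auto
  have ne': "{v,u} \<notin> E" using ne c by simp
  note ru = row[OF sg uV vV uv ne]
  note rv = row[OF sg vV uV uv[symmetric] ne', unfolded c]
  note tt = total[OF sg uV vV uv ne]
  define K where "K = Tm V (insert {u,v} E) u v + (\<Sum>y\<in>V-{u,v}. Tm V (insert {u,v} E) u y - Tm V E u y)
         + (\<Sum>y\<in>V-{u,v}. Tm V (insert {u,v} E) v y - Tm V E v y)"
  have "cM2 V (insert {u,v} E) = cM2 V E + K"
    unfolding cM2_Tm tt K_def by simp
  moreover have "(\<Sum>y\<in>V-{u,v}. Tm V (insert {u,v} E) u y - Tm V E u y) \<ge>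
      (2*int (deg V E u)+1) * int (card {y\<in>V. {u,y}\<in>E \<and> deg V E y = deg V E u})"
    unfolding ru using iu by (intro mult_left_mono) auto
  moreover have "(\<Sum>y\<in>V-{u,v}. Tm V (insert {u,v} E) v y - Tm V E v y) \<ge>
      (2*int (deg V E v)+1) * int (card {y\<in>V. {v,y}\<in>E \<and> deg V E y = deg V E v})"
    unfolding rv using iv by (intro mult_left_mono) auto
  ultimately show ?thesis unfolding K_def by linarith
qed

lemma part1:
  assumes sg: "simple_graph V E"
    and mx: "\<forall>H. simple_graph V H \<longrightarrow> cM2 V H \<le> cM2 V E"
    and uX: "u \<in> X_set V E" and vX: "v \<in> X_set V E"
    and uv: "u \<noteq> v" and ne: "{u,v} \<notin> E"
  shows "deg V E u = deg V E v \<and> {y\<in>V. {u,y}\<in>E \<and> deg V E y = deg V E u} = {}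
     \<and> {y\<in>V. {v,y}\<in>E \<and> deg V E y = deg V E v} = {}
     \<and> cM2 V (insert {u,v} E) = cM2 V E"
proof -
  have uV: "u \<in> V" and vV: "v \<in> V" using uX vX by (auto simp: X_set_def)
  have finV: "finite V" using sg by (simp add: simple_graph_def)
  note g = gain[OF sg uX vX uv ne]
  have le: "cM2 V (insert {u,v} E) \<le> cM2 V E" using mx sg'[OF sg uV vV uv ne] by blast
  have t0: "Tm V (insert {u,v} E) u v \<ge> 0" by (simp add: Tm_def)
  have p1: "(2*int (deg V E u)+1) * int (card {y\<in>V. {u,y}\<in>E \<and> deg V E y = deg V E u}) \<ge> 0" by simp
  have p2: "(2*int (deg V E v)+1) * int (card {y\<in>V. {v,y}\<in>E \<and> deg V E y = deg V E v}) \<ge> 0" by simp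
  have z0: "Tm V (insert {u,v} E) u v = 0" using g le t0 p1 p2 by linarith
  have z1: "(2*int (deg V E u)+1) * int (card {y\<in>V. {u,y}\<in>E \<and> deg V E y = deg V E u}) = 0" using g le t0 p1 p2 by linarith
  have z2: "(2*int (deg V E v)+1) * int (card {y\<in>V. {v,y}\<in>E \<and> deg V E y = deg V E v}) = 0" using g le t0 p1 p2 by linarith
  have "int (deg V E u + 1)^2 = int (deg V E v + 1)^2"
    using z0 by (simp add: Tm_def deg'_u[OF sg uV vV uv ne] deg'_v[OF sg uV vV uv ne])
  then have d: "deg V E u = deg V E v"
    by (metis add_right_cancel of_nat_eq_iff of_nat_power power2_eq_iff_nonneg zero_le)
  have e1: "{y\<in>V. {u,y}\<in>E \<and> deg V E y = deg V E u} = {}"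
  proof -
    have "card {y\<in>V. {u,y}\<in>E \<and> deg V E y = deg V E u} = 0"
      using z1 by (smt (verit) mult_eq_0_iff of_nat_0_le_iff of_nat_eq_0_iff)
    then show ?thesis using finV by simp
  qed
  have e2: "{y\<in>V. {v,y}\<in>E \<and> deg V E y = deg V E v} = {}"
  proof -
    have "card {y\<in>V. {v,y}\<in>E \<and> deg V E y = deg V E v} = 0"
      using z2 by (smt (verit) mult_eq_0_iff of_nat_0_le_iff of_nat_eq_0_iff)
    then show ?thesis using finV by simp
  qed
  have "cM2 V (insert {u,v} E) = cM2 V E" using g le t0 p1 p2 by linarith
  then show ?thesis using d e1 e2 by simp
qed


theorem claim1:
  fixes V :: "'a set" and E :: "'a set set" and u v :: 'a
  assumes "simple_graph V E"
    and "\<forall>H. simple_graph V H \<longrightarrow> cM2 V H \<le> cM2 V E"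
    and "u \<in> X_set V E" and "v \<in> X_set V E" and "u \<noteq> v" and "{u, v} \<notin> E"
  shows "deg V E u = deg V E v \<and> (\<forall>w\<in>X_set V E - {u, v}. deg V E w \<noteq> deg V E u)"
proof -
  note sg = assms(1) and mx = assms(2) and uX = assms(3) and vX = assms(4) and uv = assms(5) and ne = assms(6)
  have uV: "u \<in> V" and vV: "v \<in> V" using uX vX by (auto simp: X_set_def)
  have finV: "finite V" using sg by (simp add: simple_graph_def)
  note p = part1[OF sg mx uX vX uv ne]
  have d: "deg V E u = deg V E v" using p by (rule conjunct1)
  have e1: "{y\<in>V. {u,y}\<in>E \<and> deg V E y = deg V E u} = {}" using p by (rule conjunct2[THEN conjunct1])
  have e2: "{y\<in>V. {v,y}\<in>E \<and> deg V E y = deg V E v} = {}" using p by (rule conjunct2[THEN conjunct2, THEN conjunct1])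
  have ceq: "cM2 V (insert {u,v} E) = cM2 V E" using p by (rule conjunct2[THEN conjunct2, THEN conjunct2])
  define E' where "E' = insert {u,v} E"
  have sgE: "simple_graph V E'" using sg'[OF sg uV vV uv ne] by (simp add: E'_def)
  have mx': "\<forall>H. simple_graph V H \<longrightarrow> cM2 V H \<le> cM2 V E'" using mx ceq by (simp add: E'_def)
  have du: "deg V E' u = deg V E u + 1" using deg'_u[OF sg uV vV uv ne] by (simp add: E'_def)
  have dv: "deg V E' v = deg V E v + 1" using deg'_v[OF sg uV vV uv ne] by (simp add: E'_def)
  have dox: "deg V E' x = deg V E x" if "x \<noteq> u" "x \<noteq> v" for x
    using deg'_o[OF sg uV vV uv ne that] by (simp add: E'_def)
  have uu: "{u} \<notin> E" using sg by (auto simp: simple_graph_def)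
  have "\<forall>w\<in>X_set V E - {u, v}. deg V E w \<noteq> deg V E u"
  proof (intro ballI notI)
    fix w assume wX: "w \<in> X_set V E - {u,v}" and dw: "deg V E w = deg V E u"
    have wV: "w \<in> V" and wu: "w \<noteq> u" and wv: "w \<noteq> v" and iw: "in_deg_F V E w \<le> out_deg_F V E w"
      using wX by (auto simp: X_set_def)
    have nuw: "{u,w} \<notin> E"
    proof
      assume "{u,w} \<in> E"
      then have "w \<in> {y\<in>V. {u,y}\<in>E \<and> deg V E y = deg V E u}" using wV dw by simp
      then show False using e1 by simp
    qed
    have nvw: "{v,w} \<notin> E"
    proof
      assume "{v,w} \<in> E"
      then have "w \<in> {y\<in>V. {v,y}\<in>E \<and> deg V E y = deg V E v}" using wV dw d by simp
      then show False using e2 by simp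
    qed
    have nuw': "{u,w} \<notin> E'" using nuw wv by (auto simp: E'_def doubleton_eq_iff)
    have iu: "in_deg_F V E u \<le> out_deg_F V E u" using uX by (simp add: X_set_def)
    have "in_deg_F V E' u \<le> in_deg_F V E u"
      unfolding in_deg_F_def
    proof (rule card_mono)
      show "finite {y\<in>V. {u,y}\<in>E \<and> deg V E u < deg V E y}" using finV by simp
      show "{y\<in>V. {u,y}\<in>E' \<and> deg V E' u < deg V E' y} \<subseteq> {y\<in>V. {u,y}\<in>E \<and> deg V E u < deg V E y}"
      proof
        fix y assume y: "y \<in> {y\<in>V. {u,y}\<in>E' \<and> deg V E' u < deg V E' y}"
        have "y \<noteq> v" using y du dv d by auto
        moreover have "y \<noteq> u" using y uu by (auto simp: E'_def)
        ultimately show "y \<in> {y\<in>V. {u,y}\<in>E \<and> deg V E u < deg V E y}"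
          using y du dox[of y] by (auto simp: E'_def doubleton_eq_iff)
      qed
    qed
    moreover have "out_deg_F V E u \<le> out_deg_F V E' u"
      unfolding out_deg_F_def
    proof (rule card_mono)
      show "finite {y\<in>V. {u,y}\<in>E' \<and> deg V E' y < deg V E' u}" using finV by simp
      show "{y\<in>V. {u,y}\<in>E \<and> deg V E y < deg V E u} \<subseteq> {y\<in>V. {u,y}\<in>E' \<and> deg V E' y < deg V E' u}"
      proof
        fix y assume y: "y \<in> {y\<in>V. {u,y}\<in>E \<and> deg V E y < deg V E u}"
        have "y \<noteq> v" using y ne by auto
        moreover have "y \<noteq> u" using y by auto
        ultimately show "y \<in> {y\<in>V. {u,y}\<in>E' \<and> deg V E' y < deg V E' u}"
          using y du dox[of y] by (auto simp: E'_def)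
      qed
    qed
    ultimately have uX': "u \<in> X_set V E'" using iu uV by (simp add: X_set_def)
    have s1: "{y\<in>V. {w,y}\<in>E' \<and> deg V E' w < deg V E' y} = {y\<in>V. {w,y}\<in>E \<and> deg V E w < deg V E y}"
    proof -
      have "{w,y}\<in>E' \<longleftrightarrow> {w,y}\<in>E" for y using wu wv by (auto simp: E'_def doubleton_eq_iff)
      moreover have "{w,y}\<in>E \<Longrightarrow> deg V E' y = deg V E y" for y
      proof -
        assume a: "{w,y}\<in>E"
        have "y \<noteq> u" using a nuw by (metis insert_commute)
        moreover have "y \<noteq> v" using a nvw by (metis insert_commute)
        ultimately show ?thesis by (rule dox)
      qed
      ultimately show ?thesis using dox[OF wu wv] by auto
    qed
    have s2: "{y\<in>V. {w,y}\<in>E' \<and> deg V E' y < deg V E' w} = {y\<in>V. {w,y}\<in>E \<and> deg V E y < deg V E w}"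
    proof -
      have "{w,y}\<in>E' \<longleftrightarrow> {w,y}\<in>E" for y using wu wv by (auto simp: E'_def doubleton_eq_iff)
      moreover have "{w,y}\<in>E \<Longrightarrow> deg V E' y = deg V E y" for y
      proof -
        assume a: "{w,y}\<in>E"
        have "y \<noteq> u" using a nuw by (metis insert_commute)
        moreover have "y \<noteq> v" using a nvw by (metis insert_commute)
        ultimately show ?thesis by (rule dox)
      qed
      ultimately show ?thesis using dox[OF wu wv] by auto
    qed
    have wX': "w \<in> X_set V E'" using iw wV s1 s2 by (simp add: X_set_def in_deg_F_def out_deg_F_def)
    have "deg V E' u = deg V E' w" using part1[OF sgE mx' uX' wX' wu[symmetric] nuw'] by simp
    then show False using du dox[OF wu wv] dw by simp
  qed
  then show ?thesis using d by simp
qed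

end
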